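(* Let $\mathscr D\subset\mathbb T$ be a set whose boundary has Lebesgue measure zero and with $|\mathscr D|>0$. Fix a positive integer $N$. Then there exists a constant $C_N>0$ such that for every Riemann integrable function $\varphi:\mathbb T\to\mathbb C$, $$\limsup_{\substack{q\to\infty\\ d(q)\le N}}\frac{M_{2,\varphi}(q)}{q}\le\frac{C_N}{|\mathscr D|}\,\|\varphi\|_2^2 .$$
   Context: $\mathbb T=\mathbb R/\mathbb Z$ with Lebesgue measure $|\cdot|$; $\|\varphi\|_2$ is the $L^2(\mathbb T)$ norm. $d(q)$ is the number of positive divisors of $q$. $\mathbb Z_q^\times=\{p\in\{1,\dots,q\}:\gcd(p,q)=1\}$, $\phi(q)=|\mathbb Z_q^\times|$. $e_q(x)=e^{2\pi i x/q}$, $g_\varphi(p,q)=\sum_{h=0}^{q-1}\varphi(h/q)\,e_q(ph^2)$, and $M_{2,\varphi}(q)=\frac{1}{\phi(q)|\mathscr D|}\sum_{p\in\mathbb Z_q^\times,\ p/q\bmod1\in\mathscr D}|g_\varphi(p,q)|^2$. *)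

theory Defs
  imports "HOL-Analysis.Analysis" "HOL-Number_Theory.Number_Theory"
begin

definition riemann_integrable_on :: "(real \<Rightarrow> 'b::real_normed_vector) \<Rightarrow> real \<Rightarrow> real \<Rightarrow> bool" where
  "riemann_integrable_on f a b \<longleftrightarrow>
     (\<exists>I. \<forall>\<epsilon>>0. \<exists>\<delta>>0. \<forall>P. P tagged_division_of {a..b} \<and> (\<lambda>x. ball x \<delta>) fine P \<longrightarrow>
        norm ((\<Sum>(x,K)\<in>P. Henstock_Kurzweil_Integration.content K *\<^sub>R f x) - I) < \<epsilon>)"

definition ndiv :: "nat \<Rightarrow> nat" where
  "ndiv q = card {d. d dvd q \<and> d > 0}"

definition units_mod :: "nat \<Rightarrow> nat set" where
  "units_mod q = {p \<in> {1..q}. coprime p q}"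

definition e_q :: "nat \<Rightarrow> real \<Rightarrow> complex" where
  "e_q q x = exp (2 * of_real pi * \<i> * of_real (x / real q))"

definition gauss_phi :: "(real \<Rightarrow> complex) \<Rightarrow> nat \<Rightarrow> nat \<Rightarrow> complex" where
  "gauss_phi \<phi> p q = (\<Sum>h = 0..<q. \<phi> (real h / real q) * e_q q (real (p * h^2)))"

text \<open>\<open>D\<close> is a subset of \<open>[0,1)\<close>, representing a subset of \<open>\<real>/\<int>\<close>.\<close>
definition M2 :: "real set \<Rightarrow> (real \<Rightarrow> complex) \<Rightarrow> nat \<Rightarrow> real" where
  "M2 D \<phi> q = (1 / (real (totient q) * measure lebesgue D)) *
     (\<Sum>p \<in> {p \<in> units_mod q. frac (real p / real q) \<in> D}. (cmod (gauss_phi \<phi> p q))^2)"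

end

theory Submission
  imports Defs
begin

definition Kint :: "nat \<Rightarrow> nat \<Rightarrow> real set" where
  "Kint n k = {real k / real n .. real (Suc k) / real n}"

definition udiv :: "nat \<Rightarrow> (nat \<Rightarrow> real) \<Rightarrow> (real \<times> real set) set" where
  "udiv n t = (\<lambda>k. (t k, Kint n k)) ` {..<n}"

lemma Kint_le: "n > 0 \<Longrightarrow> real k / real n \<le> real (Suc k) / real n"
  by (simp add: divide_right_mono)

lemma Kint_inj:
  assumes "n > 0" "Kint n k = Kint n k'" shows "k = k'"
  using assms Kint_le[OF assms(1), of k] Kint_le[OF assms(1), of k'] by (auto simp: Kint_def Icc_eq_Icc divide_cancel_right)

lemma udiv_tagged:
  fixes n :: nat and t :: "nat \<Rightarrow> real"
  assumes n: "n > 0" and t: "\<And>k. k < n \<Longrightarrow> t k \<in> Kint n k"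
  shows "udiv n t tagged_division_of {0..1}"
proof (rule tagged_division_ofI)
  show "finite (udiv n t)" by (simp add: udiv_def)
  show "x \<in> K" if "(x, K) \<in> udiv n t" for x K using that t by (auto simp: udiv_def)
  show "K \<subseteq> {0..1}" if xK: "(x, K) \<in> udiv n t" for x K
  proof -
    obtain k where k: "k < n" "K = Kint n k" using xK unfolding udiv_def by blast
    have "real (Suc k) / real n \<le> 1" using k n by (simp add: divide_simps)
    thus ?thesis using k by (auto simp: Kint_def)
  qed
  show "\<exists>a b. K = cbox a b" if "(x, K) \<in> udiv n t" for x K
    using that by (auto simp: udiv_def Kint_def)
  show "interior K1 \<inter> interior K2 = {}"
    if H: "(x1, K1) \<in> udiv n t" "(x2, K2) \<in> udiv n t" "(x1, K1) \<noteq> (x2, K2)" for x1 K1 x2 K2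
  proof -
    obtain k1 where k1: "k1 < n" "x1 = t k1" "K1 = Kint n k1" using H(1) unfolding udiv_def by blast
    obtain k2 where k2: "k2 < n" "x2 = t k2" "K2 = Kint n k2" using H(2) unfolding udiv_def by blast
    have "k1 \<noteq> k2" using H k1 k2 by auto
    hence "k1 < k2 \<or> k2 < k1" by arith
    thus ?thesis
    proof
      assume "k1 < k2"
      hence "real (Suc k1) / real n \<le> real k2 / real n" using n by (simp add: divide_right_mono)
      thus ?thesis using k1 k2 by (auto simp: Kint_def)
    next
      assume "k2 < k1"
      hence "real (Suc k2) / real n \<le> real k1 / real n" using n by (simp add: divide_right_mono)
      thus ?thesis using k1 k2 by (auto simp: Kint_def)
    qed
  qed
  show "\<Union> {K. \<exists>x. (x, K) \<in> udiv n t} = {0..1}"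
  proof
    show "\<Union> {K. \<exists>x. (x, K) \<in> udiv n t} \<subseteq> {0..1}"
    proof
      fix y assume "y \<in> \<Union> {K. \<exists>x. (x, K) \<in> udiv n t}"
      then obtain k where k: "k < n" "y \<in> Kint n k" by (auto simp: udiv_def)
      have h1: "real (Suc k) / real n \<le> 1" using k n by (simp add: divide_simps)
      have h2: "0 \<le> real k / real n" by simp
      show "y \<in> {0..1}" using k(2) h1 h2 unfolding Kint_def atLeastAtMost_iff by linarith
    qed
    show "{0..1} \<subseteq> \<Union> {K. \<exists>x. (x, K) \<in> udiv n t}"
    proof
      fix y :: real assume y: "y \<in> {0..1}"
      define k where "k = min (nat \<lfloor>y * n\<rfloor>) (n - 1)"
      have kn: "k < n" using n by (simp add: k_def)
      have "y \<in> Kint n k"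
      proof (cases "y = 1")
        case True
        hence "k = n - 1" using n by (simp add: k_def)
        thus ?thesis using True n by (simp add: Kint_def of_nat_diff divide_simps)
      next
        case False
        hence y1: "y * n < n" using y n by auto
        have "\<lfloor>y * n\<rfloor> < int n" using y1 by linarith
        hence "k = nat \<lfloor>y * n\<rfloor>" unfolding k_def by linarith
        moreover have "0 \<le> \<lfloor>y * n\<rfloor>" using y by simp
        ultimately have "real k \<le> y * n" "y * n < real k + 1"
          by linarith+
        thus ?thesis using n by (simp add: Kint_def divide_simps)
      qed
      thus "y \<in> \<Union> {K. \<exists>x. (x, K) \<in> udiv n t}" using kn by (auto simp: udiv_def)
    qed
  qed
qed

lemma udiv_fine:
  assumes n: "n > 0" and t: "\<And>k. k < n \<Longrightarrow> t k \<in> Kint n k" and d: "1 / real n < \<delta>"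
  shows "(\<lambda>x. ball x \<delta>) fine udiv n t"
proof (rule fineI)
  fix x K assume "(x, K) \<in> udiv n t"
  then obtain k where k: "k < n" "x = t k" "K = Kint n k" by (auto simp: udiv_def)
  show "K \<subseteq> ball x \<delta>"
  proof
    fix y assume y: "y \<in> K"
    have "\<bar>y - x\<bar> \<le> real (Suc k) / n - real k / n"
      using y t[OF k(1)] k by (auto simp: Kint_def)
    also have "\<dots> = 1 / n" by (simp add: diff_divide_distrib[symmetric])
    finally show "y \<in> ball x \<delta>" using d by (simp add: dist_real_def abs_minus_commute)
  qed
qed

lemma udiv_sum:
  fixes g :: "real \<Rightarrow> 'a::real_vector"
  assumes n: "n > 0"
  shows "(\<Sum>(x,K)\<in>udiv n t. Henstock_Kurzweil_Integration.content K *\<^sub>R g x) = (\<Sum>k<n. (1 / real n) *\<^sub>R g (t k))"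
proof -
  have inj: "inj_on (\<lambda>k. (t k, Kint n k)) {..<n}"
    by (rule inj_onI) (use Kint_inj[OF n] in auto)
  have c: "Henstock_Kurzweil_Integration.content (Kint n k) = 1 / real n" for k
    using Kint_le[OF n, of k] by (simp add: Kint_def content_real diff_divide_distrib[symmetric])
  show ?thesis unfolding udiv_def
    by (subst sum.reindex[OF inj]) (simp add: c)
qed

lemma udiv_sum_int:
  fixes g :: "real \<Rightarrow> 'a::real_vector"
  assumes n: "n > 0"
  shows "(\<Sum>(x,K)\<in>udiv n t. g' K) = (\<Sum>k<n. g' (Kint n k))"
proof -
  have inj: "inj_on (\<lambda>k. (t k, Kint n k)) {..<n}"
    by (rule inj_onI) (use Kint_inj[OF n] in auto)
  show ?thesis unfolding udiv_def
    by (subst sum.reindex[OF inj]) simp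
qed

lemma RI_unif:
  fixes \<phi> :: "real \<Rightarrow> 'a::real_normed_vector"
  assumes "riemann_integrable_on \<phi> 0 1"
  shows "\<exists>I. \<forall>\<epsilon>>0. \<exists>n0>0. \<forall>n\<ge>n0. \<forall>t. (\<forall>k<n. t k \<in> Kint n k) \<longrightarrow>
           norm ((\<Sum>k<n. (1 / real n) *\<^sub>R \<phi> (t k)) - I) < \<epsilon>"
proof -
  obtain I where I: "\<forall>\<epsilon>>0. \<exists>\<delta>>0. \<forall>P. P tagged_division_of {0..1} \<and> (\<lambda>x. ball x \<delta>) fine P \<longrightarrow>
        norm ((\<Sum>(x,K)\<in>P. Henstock_Kurzweil_Integration.content K *\<^sub>R \<phi> x) - I) < \<epsilon>"
    using assms unfolding riemann_integrable_on_def by blast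
  have "\<exists>n0>0. \<forall>n\<ge>n0. \<forall>t. (\<forall>k<n. t k \<in> Kint n k) \<longrightarrow>
           norm ((\<Sum>k<n. (1 / real n) *\<^sub>R \<phi> (t k)) - I) < \<epsilon>" if e: "\<epsilon> > 0" for \<epsilon>
  proof -
    obtain \<delta> where d: "\<delta> > 0" and H: "\<forall>P. P tagged_division_of {0..1} \<and> (\<lambda>x. ball x \<delta>) fine P \<longrightarrow>
        norm ((\<Sum>(x,K)\<in>P. Henstock_Kurzweil_Integration.content K *\<^sub>R \<phi> x) - I) < \<epsilon>"
      using I e by blast
    define n0 where "n0 = nat \<lceil>1 / \<delta>\<rceil> + 1"
    have "n0 > 0" by (simp add: n0_def)
    moreover have "norm ((\<Sum>k<n. (1 / real n) *\<^sub>R \<phi> (t k)) - I) < \<epsilon>"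
      if n: "n \<ge> n0" and t: "\<forall>k<n. t k \<in> Kint n k" for n t
    proof -
      have npos: "n > 0" using n by (simp add: n0_def)
      have "1 / \<delta> < real n" using n unfolding n0_def by linarith
      hence "1 / real n < \<delta>" using d npos by (simp add: field_simps)
      hence "norm ((\<Sum>(x,K)\<in>udiv n t. Henstock_Kurzweil_Integration.content K *\<^sub>R \<phi> x) - I) < \<epsilon>"
        using H udiv_tagged[OF npos] udiv_fine[OF npos] t by blast
      thus ?thesis by (simp add: udiv_sum[OF npos])
    qed
    ultimately show ?thesis by blast
  qed
  thus ?thesis by blast
qed

lemma left_tag: "n > 0 \<Longrightarrow> real k / real n \<in> Kint n k"
  using Kint_le[of n k] by (simp add: Kint_def)

lemma Kint_sub: "n > 0 \<Longrightarrow> k < n \<Longrightarrow> Kint n k \<subseteq> {0..1}"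
proof -
  assume n: "n > 0" and k: "k < n"
  have h1: "real (Suc k) / real n \<le> 1" using k n by (simp add: divide_simps)
  have h2: "0 \<le> real k / real n" by simp
  show ?thesis using h1 h2 unfolding Kint_def by auto
qed

lemma Kint_find:
  assumes n: "n > 0" and x: "x \<in> {0..1::real}"
  shows "\<exists>k<n. x \<in> Kint n k"
proof -
  have "udiv n (\<lambda>k. real k / real n) tagged_division_of {0..1}"
    by (rule udiv_tagged[OF n]) (rule left_tag[OF n])
  hence "\<Union> {K. \<exists>x. (x, K) \<in> udiv n (\<lambda>k. real k / real n)} = {0..1}" by (rule tagged_division_ofD)
  hence "x \<in> \<Union> {K. \<exists>x. (x, K) \<in> udiv n (\<lambda>k. real k / real n)}" using x by simp
  then obtain K y where "x \<in> K" "(y, K) \<in> udiv n (\<lambda>k. real k / real n)" by blast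
  thus ?thesis unfolding udiv_def by blast
qed

lemma RI_bounded:
  fixes \<phi> :: "real \<Rightarrow> 'a::real_normed_vector"
  assumes "riemann_integrable_on \<phi> 0 1"
  shows "\<exists>B. \<forall>x\<in>{0..1}. norm (\<phi> x) \<le> B"
proof -
  obtain I where I: "\<forall>\<epsilon>>0. \<exists>n0>0. \<forall>n\<ge>n0. \<forall>t. (\<forall>k<n. t k \<in> Kint n k) \<longrightarrow>
           norm ((\<Sum>k<n. (1 / real n) *\<^sub>R \<phi> (t k)) - I) < \<epsilon>"
    using RI_unif[OF assms] by blast
  obtain n where n: "n > 0" and H: "\<forall>t. (\<forall>k<n. t k \<in> Kint n k) \<longrightarrow>
           norm ((\<Sum>k<n. (1 / real n) *\<^sub>R \<phi> (t k)) - I) < 1"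
    using I[rule_format, of 1] by auto
  define B where "B = 2 * real n + (\<Sum>j<n. norm (\<phi> (real j / real n)))"
  have "norm (\<phi> x) \<le> B" if x: "x \<in> {0..1}" for x
  proof -
    obtain k where k: "k < n" "x \<in> Kint n k" using Kint_find[OF n x] by blast
    define t0 where "t0 = (\<lambda>j. real j / real n)"
    define t1 where "t1 = (\<lambda>j. if j = k then x else real j / real n)"
    have v0: "\<forall>j<n. t0 j \<in> Kint n j" using left_tag[OF n] by (simp add: t0_def)
    have v1: "\<forall>j<n. t1 j \<in> Kint n j" using left_tag[OF n] k by (simp add: t1_def)
    have a0: "norm ((\<Sum>j<n. (1 / real n) *\<^sub>R \<phi> (t0 j)) - I) < 1" using H v0 by blast
    have a1: "norm ((\<Sum>j<n. (1 / real n) *\<^sub>R \<phi> (t1 j)) - I) < 1" using H v1 by blast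
    have "(\<Sum>j<n. (1 / real n) *\<^sub>R \<phi> (t1 j)) - (\<Sum>j<n. (1 / real n) *\<^sub>R \<phi> (t0 j))
          = (\<Sum>j<n. (1 / real n) *\<^sub>R (\<phi> (t1 j) - \<phi> (t0 j)))"
      by (simp add: sum_subtractf scaleR_diff_right)
    also have "\<dots> = (\<Sum>j\<in>{k}. (1 / real n) *\<^sub>R (\<phi> (t1 j) - \<phi> (t0 j)))"
      by (rule sum.mono_neutral_right) (use k in \<open>auto simp: t0_def t1_def\<close>)
    also have "\<dots> = (1 / real n) *\<^sub>R (\<phi> x - \<phi> (real k / real n))" by (simp add: t0_def t1_def)
    finally have eq: "(1 / real n) *\<^sub>R (\<phi> x - \<phi> (real k / real n)) =
       ((\<Sum>j<n. (1 / real n) *\<^sub>R \<phi> (t1 j)) - I) - ((\<Sum>j<n. (1 / real n) *\<^sub>R \<phi> (t0 j)) - I)"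
      by simp
    have "norm ((1 / real n) *\<^sub>R (\<phi> x - \<phi> (real k / real n))) < 2"
      unfolding eq by (rule le_less_trans[OF norm_triangle_ineq4]) (use a0 a1 in simp)
    hence "(1 / real n) * norm (\<phi> x - \<phi> (real k / real n)) < 2" by simp
    hence "real n * ((1 / real n) * norm (\<phi> x - \<phi> (real k / real n))) < real n * 2"
      using n by (intro mult_strict_left_mono) auto
    hence "norm (\<phi> x - \<phi> (real k / real n)) < 2 * real n" using n by simp
    moreover have "norm (\<phi> (real k / real n)) \<le> (\<Sum>j<n. norm (\<phi> (real j / real n)))"
      by (rule member_le_sum) (use k in auto)
    moreover have "norm (\<phi> x) \<le> norm (\<phi> x - \<phi> (real k / real n)) + norm (\<phi> (real k / real n))"
      using norm_triangle_ineq[of "\<phi> x - \<phi> (real k / real n)" "\<phi> (real k / real n)"] by simp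
    ultimately show ?thesis unfolding B_def by linarith
  qed
  thus ?thesis by blast
qed

lemma RI_osc:
  fixes \<phi> :: "real \<Rightarrow> complex"
  assumes "riemann_integrable_on \<phi> 0 1"
  shows "\<forall>\<epsilon>>0. \<exists>n0>0. \<forall>n\<ge>n0. \<forall>x y. (\<forall>k<n. x k \<in> Kint n k) \<and> (\<forall>k<n. y k \<in> Kint n k) \<longrightarrow>
           (\<Sum>k<n. cmod (\<phi> (x k) - \<phi> (y k))) / real n \<le> \<epsilon>"
proof (intro allI impI)
  fix \<epsilon> :: real assume e: "\<epsilon> > 0"
  obtain I where I: "\<forall>\<epsilon>>0. \<exists>n0>0. \<forall>n\<ge>n0. \<forall>t. (\<forall>k<n. t k \<in> Kint n k) \<longrightarrow>
           norm ((\<Sum>k<n. (1 / real n) *\<^sub>R \<phi> (t k)) - I) < \<epsilon>"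
    using RI_unif[OF assms] by blast
  obtain n0 where n0: "n0 > 0" and H: "\<forall>n\<ge>n0. \<forall>t. (\<forall>k<n. t k \<in> Kint n k) \<longrightarrow>
           norm ((\<Sum>k<n. (1 / real n) *\<^sub>R \<phi> (t k)) - I) < \<epsilon> / 4"
    using I[rule_format, of "\<epsilon>/4"] e by auto
  have key: "(\<Sum>k<n. cmod (\<phi> (x k) - \<phi> (y k))) / real n \<le> \<epsilon>"
    if n: "n \<ge> n0" and x: "\<forall>k<n. x k \<in> Kint n k" and y: "\<forall>k<n. y k \<in> Kint n k" for n x y
  proof -
    have npos: "n > 0" using n n0 by simp
    let ?S = "\<lambda>t. (\<Sum>k<n. (1 / real n) *\<^sub>R \<phi> (t k))"
    have diff: "norm (?S a - ?S b) < \<epsilon> / 2"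
      if a: "\<forall>k<n. a k \<in> Kint n k" and b: "\<forall>k<n. b k \<in> Kint n k" for a b
    proof -
      have "norm (?S a - I) < \<epsilon> / 4" "norm (?S b - I) < \<epsilon> / 4" using H n a b by blast+
      moreover have "norm (?S a - ?S b) \<le> norm (?S a - I) + norm (?S b - I)"
        using norm_triangle_ineq4[of "?S a - I" "?S b - I"] by simp
      ultimately show ?thesis by linarith
    qed
    have eqS: "?S a - ?S b = (1 / real n) *\<^sub>R (\<Sum>k<n. \<phi> (a k) - \<phi> (b k))" for a b
      by (simp add: scaleR_sum_right sum_subtractf scaleR_diff_right)
    define z where "z k = \<phi> (x k) - \<phi> (y k)" for k
    define a1 where "a1 k = (if Re (z k) \<ge> 0 then x k else y k)" for k
    define b1 where "b1 k = (if Re (z k) \<ge> 0 then y k else x k)" for k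
    define a2 where "a2 k = (if Im (z k) \<ge> 0 then x k else y k)" for k
    define b2 where "b2 k = (if Im (z k) \<ge> 0 then y k else x k)" for k
    have va: "\<forall>k<n. a1 k \<in> Kint n k" "\<forall>k<n. b1 k \<in> Kint n k"
             "\<forall>k<n. a2 k \<in> Kint n k" "\<forall>k<n. b2 k \<in> Kint n k"
      using x y by (auto simp: a1_def b1_def a2_def b2_def)
    have r1: "Re (\<phi> (a1 k) - \<phi> (b1 k)) = \<bar>Re (z k)\<bar>" for k
      by (auto simp: a1_def b1_def z_def)
    have r2: "Im (\<phi> (a2 k) - \<phi> (b2 k)) = \<bar>Im (z k)\<bar>" for k
      by (auto simp: a2_def b2_def z_def)
    have "Re (?S a1 - ?S b1) = (1 / real n) * (\<Sum>k<n. Re (\<phi> (a1 k) - \<phi> (b1 k)))"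
      unfolding eqS by simp
    also have "\<dots> = (\<Sum>k<n. \<bar>Re (z k)\<bar>) / real n" by (simp only: r1) simp
    finally have "(\<Sum>k<n. \<bar>Re (z k)\<bar>) / real n = Re (?S a1 - ?S b1)" by simp
    also have "\<dots> \<le> norm (?S a1 - ?S b1)" by (rule complex_Re_le_cmod)
    finally have s1: "(\<Sum>k<n. \<bar>Re (z k)\<bar>) / real n < \<epsilon> / 2" using diff[OF va(1,2)] by linarith
    have "Im (?S a2 - ?S b2) = (1 / real n) * (\<Sum>k<n. Im (\<phi> (a2 k) - \<phi> (b2 k)))"
      unfolding eqS by simp
    also have "\<dots> = (\<Sum>k<n. \<bar>Im (z k)\<bar>) / real n" by (simp only: r2) simp
    finally have "(\<Sum>k<n. \<bar>Im (z k)\<bar>) / real n = Im (?S a2 - ?S b2)" by simp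
    also have "\<dots> \<le> norm (?S a2 - ?S b2)" using abs_Im_le_cmod abs_ge_self order_trans by blast 
    finally have s2: "(\<Sum>k<n. \<bar>Im (z k)\<bar>) / real n < \<epsilon> / 2" using diff[OF va(3,4)] by linarith
    have "(\<Sum>k<n. cmod (z k)) \<le> (\<Sum>k<n. \<bar>Re (z k)\<bar> + \<bar>Im (z k)\<bar>)"
      by (rule sum_mono) (rule cmod_le)
    hence "(\<Sum>k<n. cmod (z k)) / real n \<le> (\<Sum>k<n. \<bar>Re (z k)\<bar>) / real n + (\<Sum>k<n. \<bar>Im (z k)\<bar>) / real n"
      using npos by (simp add: sum.distrib divide_right_mono add_divide_distrib[symmetric])
    thus ?thesis using s1 s2 unfolding z_def by linarith
  qed
  show "\<exists>n0>0. \<forall>n\<ge>n0. \<forall>x y. (\<forall>k<n. x k \<in> Kint n k) \<and> (\<forall>k<n. y k \<in> Kint n k) \<longrightarrow>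
           (\<Sum>k<n. cmod (\<phi> (x k) - \<phi> (y k))) / real n \<le> \<epsilon>"
    using key n0 by blast
qed

lemma sq_diff_le:
  fixes u v :: complex
  assumes "cmod u \<le> B" "cmod v \<le> B"
  shows "(cmod u)^2 - (cmod v)^2 \<le> 2 * B * cmod (u - v)"
proof -
  have e: "(cmod u)^2 - (cmod v)^2 = (cmod u - cmod v) * (cmod u + cmod v)"
    by (simp add: power2_eq_square algebra_simps)
  show ?thesis
  proof (cases "cmod u \<le> cmod v")
    case True
    hence "(cmod u - cmod v) * (cmod u + cmod v) \<le> 0"
      by (intro mult_nonpos_nonneg) auto
    moreover have "0 \<le> B" using assms(2) norm_ge_zero[of v] by linarith
    hence "0 \<le> 2 * B * cmod (u - v)" by simp
    ultimately show ?thesis using e by linarith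
  next
    case False
    have "(cmod u - cmod v) * (cmod u + cmod v) \<le> cmod (u - v) * (2 * B)"
      by (rule mult_mono) (use False assms norm_triangle_ineq2[of u v] in auto)
    thus ?thesis using e by (simp add: mult_ac)
  qed
qed

lemma exists_low:
  fixes f :: "real \<Rightarrow> real"
  assumes f: "f integrable_on {a..b}" and ab: "a < b" and eta: "\<eta> > 0"
  shows "\<exists>y\<in>{a..b}. (b - a) * f y \<le> integral {a..b} f + \<eta>"
proof (rule ccontr)
  assume "\<not> ?thesis"
  hence H: "\<forall>y\<in>{a..b}. (integral {a..b} f + \<eta>) / (b - a) \<le> f y"
    using ab by (auto simp: field_simps)
  have "integral {a..b} (\<lambda>_. (integral {a..b} f + \<eta>) / (b - a)) \<le> integral {a..b} f"
    by (rule integral_le) (use f H in auto)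
  thus False using ab eta by (simp add: content_real)
qed

lemma RS_main:
  fixes \<phi> :: "real \<Rightarrow> complex"
  assumes RI: "riemann_integrable_on \<phi> 0 1"
  shows "(\<lambda>x. (cmod (\<phi> x))^2) integrable_on {0..1}"
    and "\<forall>\<epsilon>>0. \<exists>M>0. \<forall>m\<ge>M. (\<Sum>k<m. (cmod (\<phi> (real k / real m)))^2) / real m
             \<le> integral {0..1} (\<lambda>x. (cmod (\<phi> x))^2) + \<epsilon>"
proof -
  define f where "f = (\<lambda>x. (cmod (\<phi> x))^2)"
  obtain B0 where B0: "\<forall>x\<in>{0..1}. cmod (\<phi> x) \<le> B0" using RI_bounded[OF RI] by blast
  define B where "B = max B0 0"
  have B: "\<forall>x\<in>{0..1}. cmod (\<phi> x) \<le> B" "B \<ge> 0" using B0 by (auto simp: B_def)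
  obtain I where I: "\<forall>\<epsilon>>0. \<exists>\<delta>>0. \<forall>P. P tagged_division_of {0..1} \<and> (\<lambda>x. ball x \<delta>) fine P \<longrightarrow>
        norm ((\<Sum>(x,K)\<in>P. Henstock_Kurzweil_Integration.content K *\<^sub>R \<phi> x) - I) < \<epsilon>"
    using RI unfolding riemann_integrable_on_def by blast
  have "(\<phi> has_integral I) {0..1}"
    unfolding has_integral_real
  proof (intro allI impI)
    fix e :: real assume "e > 0"
    then obtain \<delta> where "\<delta> > 0" "\<forall>P. P tagged_division_of {0..1} \<and> (\<lambda>x. ball x \<delta>) fine P \<longrightarrow>
        norm ((\<Sum>(x,K)\<in>P. Henstock_Kurzweil_Integration.content K *\<^sub>R \<phi> x) - I) < e"
      using I by blast
    thus "\<exists>\<gamma>. gauge \<gamma> \<and> (\<forall>\<D>. \<D> tagged_division_of {0..1} \<and> \<gamma> fine \<D> \<longrightarrow>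
        norm ((\<Sum>(x, k)\<in>\<D>. Henstock_Kurzweil_Integration.content k *\<^sub>R \<phi> x) - I) < e)"
      by (intro exI[of _ "\<lambda>x. ball x \<delta>"]) auto
  qed
  hence "\<phi> integrable_on {0..1}" by (rule has_integral_integrable)
  hence mphi: "\<phi> \<in> borel_measurable (lebesgue_on {0..1})" by (rule integrable_imp_measurable)
  hence mf: "f \<in> borel_measurable (lebesgue_on {0..1})" unfolding f_def by measurable
  have "f absolutely_integrable_on {0..1}"
  proof (rule measurable_bounded_by_integrable_imp_absolutely_integrable[OF mf])
    show "{0..1::real} \<in> sets lebesgue" by simp
    show "(\<lambda>_. B^2) integrable_on {0..1::real}" by (rule integrable_const_ivl)
    show "norm (f x) \<le> B^2" if "x \<in> {0..1}" for x
      using B that unfolding f_def by (simp add: power_mono)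
  qed
  hence fint: "f integrable_on {0..1}" by (simp add: absolutely_integrable_on_def)
  thus "(\<lambda>x. (cmod (\<phi> x))^2) integrable_on {0..1}" by (simp add: f_def)
  have main: "\<exists>M>0. \<forall>m\<ge>M. (\<Sum>k<m. f (real k / real m)) / real m \<le> integral {0..1} f + \<epsilon>"
    if e: "\<epsilon> > 0" for \<epsilon>
  proof -
    define e' where "e' = \<epsilon> / (2 * (2 * B + 1))"
    have e'pos: "e' > 0" unfolding e'_def using e B(2) by (intro divide_pos_pos) auto
    obtain n0 where n0: "n0 > 0" and OSC: "\<forall>n\<ge>n0. \<forall>x y. (\<forall>k<n. x k \<in> Kint n k) \<and> (\<forall>k<n. y k \<in> Kint n k) \<longrightarrow>
           (\<Sum>k<n. cmod (\<phi> (x k) - \<phi> (y k))) / real n \<le> e'"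
      using RI_osc[OF RI, rule_format, OF e'pos] by blast
    have "(\<Sum>k<m. f (real k / real m)) / real m \<le> integral {0..1} f + \<epsilon>" if m: "m \<ge> n0" for m
    proof -
      have mpos: "m > 0" using m n0 by simp
      have "\<exists>y. y \<in> Kint m k \<and> (1 / real m) * f y \<le> integral (Kint m k) f + \<epsilon> / 2 / real m"
        if k: "k < m" for k
      proof -
        have sub: "Kint m k \<subseteq> {0..1}" by (rule Kint_sub[OF mpos k])
        have fi: "f integrable_on Kint m k"
          unfolding Kint_def by (rule integrable_on_subinterval[OF fint]) (use sub in \<open>simp add: Kint_def\<close>)
        have lt: "real k / real m < real (Suc k) / real m" using mpos by (simp add: divide_strict_right_mono)
        have "\<epsilon> / 2 / real m > 0" using e mpos by simp
        from exists_low[OF fi[unfolded Kint_def] lt this] obtain y where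
          y: "y \<in> Kint m k" "(real (Suc k) / real m - real k / real m) * f y \<le> integral (Kint m k) f + \<epsilon> / 2 / real m"
          unfolding Kint_def by blast
        have "real (Suc k) / real m - real k / real m = 1 / real m" by (simp add: diff_divide_distrib[symmetric])
        thus ?thesis using y by auto
      qed
      then obtain y where y: "\<And>k. k < m \<Longrightarrow> y k \<in> Kint m k \<and> (1 / real m) * f (y k) \<le> integral (Kint m k) f + \<epsilon> / 2 / real m"
        by metis
      have yv: "\<forall>k<m. y k \<in> Kint m k" using y by blast
      have tv: "\<forall>k<m. real k / real m \<in> Kint m k" using left_tag[OF mpos] by blast
      have osc: "(\<Sum>k<m. cmod (\<phi> (real k / real m) - \<phi> (y k))) / real m \<le> e'"
        using OSC[rule_format, OF m, of "\<lambda>k. real k / real m" y] yv tv by blast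
      have div: "udiv m y tagged_division_of {0..1}" by (rule udiv_tagged[OF mpos]) (use yv in blast)
      have "integral {0..1} f = (\<Sum>(x, K)\<in>udiv m y. integral K f)"
        using integral_combine_tagged_division_topdown[of f 0 1 "udiv m y"] fint div
        by (simp only: box_real(2))
      also have "\<dots> = (\<Sum>k<m. integral (Kint m k) f)" by (rule udiv_sum_int[OF mpos])
      finally have J: "integral {0..1} f = (\<Sum>k<m. integral (Kint m k) f)" .
      have s1: "(\<Sum>k<m. (1 / real m) * f (y k)) \<le> integral {0..1} f + \<epsilon> / 2"
      proof -
        have "(\<Sum>k<m. (1 / real m) * f (y k)) \<le> (\<Sum>k<m. integral (Kint m k) f + \<epsilon> / 2 / real m)"
          by (rule sum_mono) (use y in blast)
        also have "\<dots> = (\<Sum>k<m. integral (Kint m k) f) + real m * (\<epsilon> / 2 / real m)"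
          by (simp add: sum.distrib)
        also have "\<dots> = integral {0..1} f + \<epsilon> / 2" using mpos J by simp
        finally show ?thesis .
      qed
      have pt: "f (real k / real m) - f (y k) \<le> 2 * B * cmod (\<phi> (real k / real m) - \<phi> (y k))"
        if k: "k < m" for k
      proof -
        have "real k / real m \<in> {0..1}" "y k \<in> {0..1}"
          using subsetD[OF Kint_sub[OF mpos k]] tv yv k by blast+
        thus ?thesis unfolding f_def by (intro sq_diff_le) (use B in auto)
      qed
      have "(\<Sum>k<m. f (real k / real m)) / real m
            = (\<Sum>k<m. (1 / real m) * f (y k)) + (\<Sum>k<m. f (real k / real m) - f (y k)) / real m"
        by (simp add: sum_subtractf sum_divide_distrib[symmetric] diff_divide_distrib sum_distrib_left[symmetric])
      also have "(\<Sum>k<m. f (real k / real m) - f (y k)) / real m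
                 \<le> (\<Sum>k<m. 2 * B * cmod (\<phi> (real k / real m) - \<phi> (y k))) / real m"
        by (intro divide_right_mono sum_mono) (use pt in auto)
      also have "\<dots> = 2 * B * ((\<Sum>k<m. cmod (\<phi> (real k / real m) - \<phi> (y k))) / real m)"
        by (simp add: sum_distrib_left)
      also have "\<dots> \<le> 2 * B * e'" using osc B by (intro mult_left_mono) auto
      also have "2 * B * e' \<le> \<epsilon> / 2"
      proof -
        have "2 * B * e' = \<epsilon> / 2 * (2 * B / (2 * B + 1))" using B by (simp add: e'_def field_simps)
        also have "\<dots> \<le> \<epsilon> / 2 * 1" using B e by (intro mult_left_mono) auto
        finally show ?thesis by simp
      qed
      finally show ?thesis using s1 by linarith
    qed
    thus ?thesis using n0 by blast
  qed
  thus "\<forall>\<epsilon>>0. \<exists>M>0. \<forall>m\<ge>M. (\<Sum>k<m. (cmod (\<phi> (real k / real m)))^2) / real m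
             \<le> integral {0..1} (\<lambda>x. (cmod (\<phi> x))^2) + \<epsilon>" unfolding f_def by blast
qed

definition ww :: "nat \<Rightarrow> int \<Rightarrow> complex" where
  "ww q n = exp (2 * of_real pi * \<i> * of_int n / of_nat q)"

lemma ww_eq_1_iff:
  assumes q: "q > 0"
  shows "ww q n = 1 \<longleftrightarrow> int q dvd n"
proof
  assume "ww q n = 1"
  then obtain m :: int where m: "Im (2 * of_real pi * \<i> * of_int n / of_nat q) = of_int (2 * m) * pi"
    unfolding ww_def exp_eq_1 by blast
  hence "2 * pi * of_int n / of_nat q = of_int (2 * m) * pi" by simp
  hence "real_of_int n = real_of_int m * real q" using q by (simp add: field_simps)
  hence "n = m * int q" by (metis of_int_eq_iff of_int_mult of_int_of_nat_eq)
  thus "int q dvd n" by simp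
next
  assume "int q dvd n"
  then obtain m where m: "n = int q * m" by blast
  have "2 * of_real pi * \<i> * of_int n / of_nat q = (2 * of_int m * pi) * \<i>"
    using q by (simp add: m field_simps)
  thus "ww q n = 1" unfolding ww_def using exp_integer_2pi[of "real_of_int m"] by simp
qed

lemma ww_pow_q: "q > 0 \<Longrightarrow> ww q n ^ q = 1"
proof -
  assume q: "q > 0"
  have "ww q n ^ q = exp (of_nat q * (2 * of_real pi * \<i> * of_int n / of_nat q))"
    unfolding ww_def by (rule exp_of_nat_mult[symmetric])
  also have "of_nat q * (2 * of_real pi * \<i> * of_int n / of_nat q) = (2 * of_int n * pi) * \<i>"
    using q by (simp add: field_simps)
  also have "exp \<dots> = 1" using exp_integer_2pi[of "real_of_int n"] by simp
  finally show ?thesis .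
qed

lemma orth:
  assumes q: "q > 0"
  shows "(\<Sum>p\<in>{1..q}. ww q n ^ p) = (if int q dvd n then of_nat q else 0)"
proof -
  have "(\<Sum>p\<in>{1..q}. ww q n ^ p) = ww q n * (\<Sum>p<q. ww q n ^ p)"
    using sum.atLeast1_atMost_eq[of "\<lambda>p. ww q n ^ p" q] by (simp add: sum_distrib_left)
  also have "\<dots> = (if int q dvd n then of_nat q else 0)"
    using ww_eq_1_iff[OF q, of n] ww_pow_q[OF q, of n] by (simp add: sum_gp_strict)
  finally show ?thesis .
qed

lemma eq_prod:
  assumes q: "q > 0"
  shows "e_q q (real (p * h^2)) * cnj (e_q q (real (p * h'^2))) = ww q (int h^2 - int h'^2) ^ p"
proof -
  have "e_q q (real (p * h^2)) * cnj (e_q q (real (p * h'^2)))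
        = exp (2 * of_real pi * \<i> * of_real (real (p * h^2) / real q) + cnj (2 * of_real pi * \<i> * of_real (real (p * h'^2) / real q)))"
    unfolding e_q_def by (simp only: exp_cnj exp_add[symmetric])
  also have "2 * of_real pi * \<i> * of_real (real (p * h^2) / real q) + cnj (2 * of_real pi * \<i> * of_real (real (p * h'^2) / real q))
     = of_nat p * (2 * of_real pi * \<i> * of_int (int h^2 - int h'^2) / of_nat q)"
    using q by (simp add: field_simps complex_eq_iff)
  also have "exp \<dots> = ww q (int h^2 - int h'^2) ^ p" unfolding ww_def by (rule exp_of_nat_mult)
  finally show ?thesis .
qed

lemma parseval:
  fixes \<phi> :: "real \<Rightarrow> complex"
  assumes q: "q > 0"
  shows "complex_of_real (\<Sum>p\<in>{1..q}. (cmod (gauss_phi \<phi> p q))^2)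
    = of_nat q * (\<Sum>h<q. \<Sum>h'<q. if int q dvd (int h^2 - int h'^2)
          then \<phi> (real h / real q) * cnj (\<phi> (real h' / real q)) else 0)"
proof -
  let ?a = "\<lambda>h. \<phi> (real h / real q)"
  have "complex_of_real (\<Sum>p\<in>{1..q}. (cmod (gauss_phi \<phi> p q))^2)
        = (\<Sum>p\<in>{1..q}. gauss_phi \<phi> p q * cnj (gauss_phi \<phi> p q))"
    by (simp only: of_real_sum complex_norm_square)
  also have "\<dots> = (\<Sum>p\<in>{1..q}. \<Sum>h<q. \<Sum>h'<q. ?a h * cnj (?a h') * ww q (int h^2 - int h'^2) ^ p)"
  proof (rule sum.cong[OF refl])
    fix p
    have "gauss_phi \<phi> p q * cnj (gauss_phi \<phi> p q)
       = (\<Sum>h<q. ?a h * e_q q (real (p * h^2))) * (\<Sum>h'<q. cnj (?a h') * cnj (e_q q (real (p * h'^2))))"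
      unfolding gauss_phi_def by (simp add: atLeast0LessThan)
    also have "\<dots> = (\<Sum>h<q. \<Sum>h'<q. ?a h * cnj (?a h') * (e_q q (real (p * h^2)) * cnj (e_q q (real (p * h'^2)))))"
      by (simp add: sum_product mult_ac)
    also have "\<dots> = (\<Sum>h<q. \<Sum>h'<q. ?a h * cnj (?a h') * ww q (int h^2 - int h'^2) ^ p)"
      by (simp only: eq_prod[OF q])
    finally show "gauss_phi \<phi> p q * cnj (gauss_phi \<phi> p q) = (\<Sum>h<q. \<Sum>h'<q. ?a h * cnj (?a h') * ww q (int h^2 - int h'^2) ^ p)" .
  qed
  also have "\<dots> = (\<Sum>h<q. \<Sum>p\<in>{1..q}. \<Sum>h'<q. ?a h * cnj (?a h') * ww q (int h^2 - int h'^2) ^ p)"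
    by (rule sum.swap)
  also have "\<dots> = (\<Sum>h<q. \<Sum>h'<q. \<Sum>p\<in>{1..q}. ?a h * cnj (?a h') * ww q (int h^2 - int h'^2) ^ p)"
    by (rule sum.cong[OF refl], rule sum.swap)
  also have "\<dots> = (\<Sum>h<q. \<Sum>h'<q. ?a h * cnj (?a h') * (\<Sum>p\<in>{1..q}. ww q (int h^2 - int h'^2) ^ p))"
    by (simp only: sum_distrib_left)
  also have "\<dots> = (\<Sum>h<q. \<Sum>h'<q. ?a h * cnj (?a h') * (if int q dvd (int h^2 - int h'^2) then of_nat q else 0))"
    by (simp only: orth[OF q])
  also have "\<dots> = of_nat q * (\<Sum>h<q. \<Sum>h'<q. if int q dvd (int h^2 - int h'^2)
          then ?a h * cnj (?a h') else 0)"
    by (simp add: sum_distrib_left if_distrib mult_ac cong: if_cong)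
  finally show ?thesis .
qed

lemma half_dvd:
  fixes g h :: nat
  assumes "g dvd 2 * h"
  shows "g div gcd g 2 dvd h"
proof (cases "even g")
  case True
  then obtain t where t: "g = 2 * t" by blast
  have "gcd g 2 = 2" using True by (simp add: gcd.commute)
  moreover have "t dvd h" using assms t by simp
  ultimately show ?thesis using t by simp
next
  case False
  hence "coprime g 2" by (simp add: coprime_commute)
  hence "g dvd h" using assms coprime_dvd_mult_right_iff by blast
  moreover have "gcd g 2 = 1" using \<open>coprime g 2\<close> by simp
  ultimately show ?thesis by simp
qed

lemma cover:
  fixes q h h' :: nat
  assumes q: "q > 0" and C: "int q dvd (int h^2 - int h'^2)"
  shows "\<exists>d. d dvd q \<and> d > 0 \<and> int d dvd (int h - int h') \<and> int (q div d) dvd (int h + int h')"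
proof -
  define x where "x = int h - int h'"
  define y where "y = int h + int h'"
  define G where "G = gcd (int q) x"
  have Gpos: "G > 0" using q by (simp add: G_def)
  define d where "d = nat G"
  have dG: "int d = G" using Gpos by (simp add: d_def)
  have "G dvd int q" by (simp add: G_def)
  hence ddvd: "d dvd q" using dG by (metis of_nat_dvd_iff)
  have dpos: "d > 0" using Gpos dG by simp
  have Gx: "G dvd x" by (simp add: G_def)
  have qd: "int (q div d) = int q div G" using dG by (simp add: zdiv_int)
  define Q' where "Q' = int q div G"
  define X' where "X' = x div G"
  have cop: "coprime Q' X'" unfolding Q'_def X'_def G_def
    by (rule div_gcd_coprime) (use q in simp)
  have eq1: "int q = G * Q'" unfolding Q'_def using \<open>G dvd int q\<close> by simp
  have eq2: "x = G * X'" unfolding X'_def using Gx by simp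
  have "int h^2 - int h'^2 = x * y" by (simp add: x_def y_def power2_eq_square algebra_simps)
  hence "G * Q' dvd G * (X' * y)" using C eq1 eq2 by (simp add: mult.assoc)
  hence "Q' dvd X' * y" using Gpos by simp
  hence "Q' dvd y" using cop coprime_dvd_mult_right_iff by blast
  hence "int (q div d) dvd y" using qd Q'_def by simp
  moreover have "int d dvd x" using dG Gx by simp
  ultimately show ?thesis using ddvd dpos unfolding x_def y_def by blast
qed

lemma card_A:
  fixes q d h :: nat
  assumes q: "q > 0" and dq: "d dvd q" and dpos: "d > 0"
  shows "card {h'. h' < q \<and> int d dvd (int h - int h') \<and> int (q div d) dvd (int h + int h')}
         \<le> gcd d (q div d)"
proof -
  define e where "e = q div d"
  define A where "A = {h'. h' < q \<and> int d dvd (int h - int h') \<and> int e dvd (int h + int h')}"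
  define L where "L = lcm d e"
  define g where "g = gcd d e"
  have qde: "q = d * e" using dq by (simp add: e_def)
  have "e \<noteq> 0" using q qde by auto
  hence epos: "e > 0" by simp
  have Lpos: "L > 0" using dpos epos by (simp add: L_def lcm_pos_nat)
  have "g * L = d * e" unfolding g_def L_def using prod_gcd_lcm_nat[of d e] by simp
  hence qLg: "q = L * g" using qde by (simp add: mult.commute)
  have cong: "h1 mod L = h2 mod L" if h1: "h1 \<in> A" and h2: "h2 \<in> A" for h1 h2
  proof -
    have a1: "int d dvd int h - int h1" "int e dvd int h + int h1" using h1 by (simp_all add: A_def)
    have a2: "int d dvd int h - int h2" "int e dvd int h + int h2" using h2 by (simp_all add: A_def)
    have "int d dvd (int h - int h2) - (int h - int h1)" by (rule dvd_diff[OF a2(1) a1(1)])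
    hence a: "int d dvd int h1 - int h2" by simp
    have "int e dvd (int h + int h1) - (int h + int h2)" by (rule dvd_diff[OF a1(2) a2(2)])
    hence b: "int e dvd int h1 - int h2" by simp
    have "lcm (int d) (int e) dvd int h1 - int h2" using a b by (rule lcm_least)
    hence "int L dvd int h1 - int h2" by (simp only: L_def lcm_int_int_eq)
    hence "[int h1 = int h2] (mod int L)" by (simp add: cong_iff_dvd_diff)
    hence "[h1 = h2] (mod L)" by (simp add: cong_int_iff)
    thus ?thesis by (simp add: cong_def)
  qed
  have inj: "inj_on (\<lambda>x. x div L) A"
  proof (rule inj_onI)
    fix h1 h2 assume "h1 \<in> A" "h2 \<in> A" "h1 div L = h2 div L"
    moreover have "h1 mod L = h2 mod L" using cong \<open>h1 \<in> A\<close> \<open>h2 \<in> A\<close> by blast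
    ultimately have "h1 div L * L + h1 mod L = h2 div L * L + h2 mod L" by simp
    thus "h1 = h2" by (simp only: div_mult_mod_eq)
  qed
  have img: "(\<lambda>x. x div L) ` A \<subseteq> {..<g}"
  proof
    fix z assume "z \<in> (\<lambda>x. x div L) ` A"
    then obtain x where x: "x \<in> A" "z = x div L" by blast
    have "x < L * g" using x qLg unfolding A_def by simp
    hence "x div L < g" using Lpos by (simp add: div_less_iff_less_mult mult.commute)
    thus "z \<in> {..<g}" using x by simp
  qed
  have "card A \<le> card {..<g}"
    by (rule card_inj_on_le[OF inj img]) simp
  thus ?thesis by (simp add: A_def g_def e_def)
qed

lemma A_nonempty:
  fixes q d h h' :: nat
  assumes "int d dvd (int h - int h')" "int (q div d) dvd (int h + int h')"
  shows "gcd d (q div d) div gcd (gcd d (q div d)) 2 dvd h"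
proof -
  define g where "g = gcd d (q div d)"
  have "int g dvd int d" by (simp add: g_def)
  hence a: "int g dvd (int h - int h')" using assms(1) dvd_trans by blast
  have "int g dvd int (q div d)" by (simp add: g_def)
  hence b: "int g dvd (int h + int h')" using assms(2) dvd_trans by blast
  have "int g dvd (int h - int h') + (int h + int h')" using a b by (rule dvd_add)
  hence "int g dvd int (2 * h)" by simp
  hence "g dvd 2 * h" by (simp only: of_nat_dvd_iff)
  thus ?thesis unfolding g_def[symmetric] by (rule half_dvd)
qed

lemma sum_if_card:
  fixes c :: real and q :: nat and P :: "nat \<Rightarrow> bool"
  shows "(\<Sum>x<q. if P x then c else 0) = real (card {x. x < q \<and> P x}) * c"
proof -
  have "(\<Sum>x<q. if P x then c else 0) = (\<Sum>x\<in>{x \<in> {..<q}. P x}. c)"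
    using sum.inter_filter[OF finite_lessThan, where g="\<lambda>_. c" and P=P] by simp
  also have "{x \<in> {..<q}. P x} = {x. x < q \<and> P x}" by auto
  finally show ?thesis by simp
qed

lemma sym_bound:
  fixes a :: "nat \<Rightarrow> real" and C :: "nat \<Rightarrow> nat \<Rightarrow> bool"
  assumes sym: "\<And>x y. C x y = C y x" and nn: "\<And>x. a x \<ge> 0"
  shows "(\<Sum>h<q. \<Sum>h'<q. if C h h' then a h * a h' else 0)
         \<le> (\<Sum>h<q. (a h)^2 * real (card {h'. h' < q \<and> C h h'}))"
proof -
  have "(\<Sum>h<q. \<Sum>h'<q. if C h h' then a h * a h' else 0)
        \<le> (\<Sum>h<q. \<Sum>h'<q. if C h h' then ((a h)^2 + (a h')^2) / 2 else 0)"
  proof (intro sum_mono)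
    fix h h'
    have "0 \<le> (a h - a h')^2" by simp
    hence "a h * a h' \<le> ((a h)^2 + (a h')^2) / 2" by (simp add: power2_eq_square algebra_simps)
    thus "(if C h h' then a h * a h' else 0) \<le> (if C h h' then ((a h)^2 + (a h')^2) / 2 else 0)"
      by simp
  qed
  also have "\<dots> = (\<Sum>h<q. \<Sum>h'<q. if C h h' then (a h)^2 / 2 else 0)
                  + (\<Sum>h<q. \<Sum>h'<q. if C h h' then (a h')^2 / 2 else 0)"
    by (simp add: sum.distrib[symmetric] add_divide_distrib if_distrib cong: if_cong)
  also have "(\<Sum>h<q. \<Sum>h'<q. if C h h' then (a h')^2 / 2 else 0)
           = (\<Sum>h'<q. \<Sum>h<q. if C h h' then (a h')^2 / 2 else 0)"
    by (rule sum.swap)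
  also have "\<dots> = (\<Sum>h<q. \<Sum>h'<q. if C h h' then (a h)^2 / 2 else 0)"
    using sym by simp
  also have "(\<Sum>h<q. \<Sum>h'<q. if C h h' then (a h)^2 / 2 else 0)
           + (\<Sum>h<q. \<Sum>h'<q. if C h h' then (a h)^2 / 2 else 0)
           = (\<Sum>h<q. \<Sum>h'<q. if C h h' then (a h)^2 else 0)"
    by (simp add: sum.distrib[symmetric] if_distrib cong: if_cong)
  also have "\<dots> = (\<Sum>h<q. (a h)^2 * real (card {h'. h' < q \<and> C h h'}))"
    by (rule sum.cong[OF refl]) (simp add: sum_if_card)
  finally show ?thesis .
qed

definition Dq :: "nat \<Rightarrow> nat set" where "Dq q = {d. d dvd q \<and> d > 0}"
definition gd :: "nat \<Rightarrow> nat \<Rightarrow> nat" where "gd q d = gcd d (q div d)"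
definition sd :: "nat \<Rightarrow> nat \<Rightarrow> nat" where "sd q d = gd q d div gcd (gd q d) 2"

lemma finite_Dq: "q > 0 \<Longrightarrow> finite (Dq q)"
  unfolding Dq_def by (rule finite_subset[of _ "{..q}"]) (auto dest: dvd_imp_le)

lemma card_R_bound:
  assumes q: "q > 0"
  shows "real (card {h'. h' < q \<and> int q dvd (int h^2 - int h'^2)})
         \<le> (\<Sum>d\<in>Dq q. if sd q d dvd h then real (gd q d) else 0)"
proof -
  define A where "A d = {h'. h' < q \<and> int d dvd (int h - int h') \<and> int (q div d) dvd (int h + int h')}" for d
  have sub: "{h'. h' < q \<and> int q dvd (int h^2 - int h'^2)} \<subseteq> (\<Union>d\<in>Dq q. A d)"
  proof
    fix h' assume "h' \<in> {h'. h' < q \<and> int q dvd (int h^2 - int h'^2)}"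
    hence h': "h' < q" "int q dvd (int h^2 - int h'^2)" by auto
    obtain d where "d dvd q" "d > 0" "int d dvd (int h - int h')" "int (q div d) dvd (int h + int h')"
      using cover[OF q h'(2)] by blast
    thus "h' \<in> (\<Union>d\<in>Dq q. A d)" using h'(1) by (auto simp: Dq_def A_def)
  qed
  have finA: "\<forall>d\<in>Dq q. finite (A d)" by (auto simp: A_def)
  have "card {h'. h' < q \<and> int q dvd (int h^2 - int h'^2)} \<le> card (\<Union>d\<in>Dq q. A d)"
    by (rule card_mono) (use finA finite_Dq[OF q] sub in auto)
  also have "\<dots> \<le> (\<Sum>d\<in>Dq q. card (A d))" by (rule card_UN_le[OF finite_Dq[OF q]])
  finally have "real (card {h'. h' < q \<and> int q dvd (int h^2 - int h'^2)}) \<le> (\<Sum>d\<in>Dq q. real (card (A d)))"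
    by (simp flip: of_nat_sum)
  also have "\<dots> \<le> (\<Sum>d\<in>Dq q. if sd q d dvd h then real (gd q d) else 0)"
  proof (rule sum_mono)
    fix d assume d: "d \<in> Dq q"
    show "real (card (A d)) \<le> (if sd q d dvd h then real (gd q d) else 0)"
    proof (cases "sd q d dvd h")
      case True
      have "card (A d) \<le> gd q d" unfolding A_def gd_def
        by (rule card_A) (use q d in \<open>auto simp: Dq_def\<close>)
      thus ?thesis using True by simp
    next
      case False
      have "A d = {}"
      proof (rule ccontr)
        assume "A d \<noteq> {}"
        then obtain h' where "h' \<in> A d" by blast
        hence "sd q d dvd h" unfolding sd_def gd_def A_def using A_nonempty by blast
        thus False using False by blast
      qed
      thus ?thesis using False by simp
    qed
  qed
  finally show ?thesis .
qed

lemma Dq_props: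
  assumes q: "q > 0" and d: "d \<in> Dq q"
  shows "sd q d > 0" "sd q d dvd q" "gd q d \<le> 2 * sd q d" "q \<le> (q div sd q d) * (q div sd q d)"
    "sd q d * (q div sd q d) = q"
proof -
  have dq: "d dvd q" "d > 0" using d by (auto simp: Dq_def)
  define g where "g = gd q d"
  define e where "e = q div d"
  have qde: "q = d * e" using dq by (simp add: e_def)
  have epos: "e > 0" using q qde by (cases e) auto
  have gpos: "g > 0" using dq by (simp add: g_def gd_def)
  have gq: "g dvd q" unfolding g_def gd_def using dq by (meson dvd_trans gcd_dvd1)
  have "g dvd d" "g dvd e" unfolding g_def gd_def e_def by auto
  hence "g * g dvd d * e" by (rule mult_dvd_mono)
  hence gg: "g * g dvd q" using qde by simp
  have c2: "gcd g 2 dvd g" by simp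
  have c2pos: "gcd g 2 > 0" by simp
  have gs: "g = gcd g 2 * sd q d" unfolding sd_def g_def[symmetric] using c2 by simp
  show spos: "sd q d > 0" using gs gpos by (cases "sd q d") auto
  show sq: "sd q d dvd q" using gs gq by (metis dvd_mult_right dvd_trans)
  have "gcd g 2 \<le> 2" by (rule dvd_imp_le) auto
  hence "g \<le> 2 * sd q d" using gs by (metis mult_le_mono1)
  thus "gd q d \<le> 2 * sd q d" by (simp add: g_def)
  define m where "m = q div sd q d"
  show qm: "sd q d * (q div sd q d) = q" using sq by simp
  have "sd q d dvd g" using gs by (metis dvd_triv_right)
  hence "sd q d \<le> g" using gpos by (metis dvd_imp_le)
  hence "sd q d * sd q d \<le> g * g" by (simp add: mult_le_mono)
  also have "\<dots> \<le> q" using gg q by (rule dvd_imp_le)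
  finally have "sd q d * sd q d \<le> sd q d * m" using qm by (simp add: m_def)
  hence "sd q d \<le> m" using spos by simp
  hence "m * sd q d \<le> m * m" by simp
  thus "q \<le> (q div sd q d) * (q div sd q d)" using qm by (simp add: m_def mult.commute)
qed

lemma sum_multiples:
  fixes f :: "real \<Rightarrow> real"
  assumes s: "s > 0" "s dvd q" and q: "q > 0"
  shows "(\<Sum>h\<in>{h. h < q \<and> s dvd h}. f (real h / real q)) = (\<Sum>k<q div s. f (real k / real (q div s)))"
proof -
  define m where "m = q div s"
  have qms: "q = m * s" using s by (simp add: m_def)
  have img: "{h. h < q \<and> s dvd h} = (\<lambda>k. k * s) ` {..<m}"
  proof
    show "{h. h < q \<and> s dvd h} \<subseteq> (\<lambda>k. k * s) ` {..<m}"
    proof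
      fix h assume "h \<in> {h. h < q \<and> s dvd h}"
      then obtain k where k: "h = k * s" "k * s < m * s" using qms by (auto simp: mult.commute elim!: dvdE)
      hence "k < m" using s by simp
      thus "h \<in> (\<lambda>k. k * s) ` {..<m}" using k by blast
    qed
    show "(\<lambda>k. k * s) ` {..<m} \<subseteq> {h. h < q \<and> s dvd h}"
      using qms s by auto
  qed
  have inj: "inj_on (\<lambda>k. k * s) {..<m}" using s by (auto simp: inj_on_def)
  have "(\<Sum>h\<in>{h. h < q \<and> s dvd h}. f (real h / real q)) = (\<Sum>k<m. f (real (k * s) / real q))"
    unfolding img by (simp add: sum.reindex[OF inj])
  also have "\<dots> = (\<Sum>k<m. f (real k / real m))"
    using s by (intro sum.cong refl) (simp add: qms)
  finally show ?thesis by (simp add: m_def)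
qed

lemma swap_step:
  fixes b :: "nat \<Rightarrow> real"
  assumes q: "q > 0"
  shows "(\<Sum>h<q. b h * (\<Sum>d\<in>Dq q. if sd q d dvd h then real (gd q d) else 0))
       = (\<Sum>d\<in>Dq q. real (gd q d) * (\<Sum>h\<in>{h. h < q \<and> sd q d dvd h}. b h))"
proof -
  have "(\<Sum>h<q. b h * (\<Sum>d\<in>Dq q. if sd q d dvd h then real (gd q d) else 0))
        = (\<Sum>h<q. \<Sum>d\<in>Dq q. if sd q d dvd h then real (gd q d) * b h else 0)"
    by (simp add: sum_distrib_left if_distrib mult.commute cong: if_cong)
  also have "\<dots> = (\<Sum>d\<in>Dq q. \<Sum>h<q. if sd q d dvd h then real (gd q d) * b h else 0)"
    by (rule sum.swap)
  also have "\<dots> = (\<Sum>d\<in>Dq q. real (gd q d) * (\<Sum>h\<in>{h. h < q \<and> sd q d dvd h}. b h))"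
  proof (rule sum.cong[OF refl])
    fix d
    have "(\<Sum>h<q. if sd q d dvd h then real (gd q d) * b h else 0)
       = (\<Sum>h\<in>{h \<in> {..<q}. sd q d dvd h}. real (gd q d) * b h)"
      using sum.inter_filter[OF finite_lessThan, where g="\<lambda>h. real (gd q d) * b h" and P="\<lambda>h. sd q d dvd h"]
      by simp
    also have "{h \<in> {..<q}. sd q d dvd h} = {h. h < q \<and> sd q d dvd h}" by auto
    finally show "(\<Sum>h<q. if sd q d dvd h then real (gd q d) * b h else 0)
       = real (gd q d) * (\<Sum>h\<in>{h. h < q \<and> sd q d dvd h}. b h)" by (simp add: sum_distrib_left)
  qed
  finally show ?thesis .
qed

lemma bound_q:
  fixes \<phi> :: "real \<Rightarrow> complex" and q :: nat and T :: real
  assumes q: "q > 0"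
    and R: "\<And>m. q \<le> m * m \<Longrightarrow> (\<Sum>k<m. (cmod (\<phi> (real k / real m)))^2) / real m \<le> T"
  shows "(\<Sum>p\<in>{1..q}. (cmod (gauss_phi \<phi> p q))^2) \<le> 2 * (real q)^2 * real (card (Dq q)) * T"
proof -
  define f where "f x = (cmod (\<phi> x))^2" for x
  define a where "a h = cmod (\<phi> (real h / real q))" for h
  define C where "C h h' = (int q dvd (int h^2 - int h'^2))" for h h'
  have Csym: "C x y = C y x" for x y
  proof -
    have "int q dvd (int x^2 - int y^2) \<longleftrightarrow> int q dvd -(int y^2 - int x^2)" by simp
    thus ?thesis unfolding C_def by (simp only: dvd_minus_iff)
  qed
  let ?S = "\<Sum>p\<in>{1..q}. (cmod (gauss_phi \<phi> p q))^2"
  have Snn: "?S \<ge> 0" by (simp add: sum_nonneg)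
  have "?S = cmod (complex_of_real ?S)" by (simp only: norm_of_real abs_of_nonneg[OF Snn])
  also have "complex_of_real ?S = of_nat q * (\<Sum>h<q. \<Sum>h'<q. if C h h'
          then \<phi> (real h / real q) * cnj (\<phi> (real h' / real q)) else 0)"
    unfolding C_def by (rule parseval[OF q])
  also have "cmod \<dots> \<le> real q * (\<Sum>h<q. \<Sum>h'<q. if C h h' then a h * a h' else 0)"
  proof -
    have "cmod (\<Sum>h<q. \<Sum>h'<q. if C h h' then \<phi> (real h / real q) * cnj (\<phi> (real h' / real q)) else 0)
        \<le> (\<Sum>h<q. cmod (\<Sum>h'<q. if C h h' then \<phi> (real h / real q) * cnj (\<phi> (real h' / real q)) else 0))"
      by (rule norm_sum)
    also have "\<dots> \<le> (\<Sum>h<q. \<Sum>h'<q. cmod (if C h h' then \<phi> (real h / real q) * cnj (\<phi> (real h' / real q)) else 0))"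
      by (intro sum_mono norm_sum)
    also have "\<dots> = (\<Sum>h<q. \<Sum>h'<q. if C h h' then a h * a h' else 0)"
      by (intro sum.cong refl) (simp add: a_def norm_mult)
    finally have "cmod (\<Sum>h<q. \<Sum>h'<q. if C h h' then \<phi> (real h / real q) * cnj (\<phi> (real h' / real q)) else 0)
        \<le> (\<Sum>h<q. \<Sum>h'<q. if C h h' then a h * a h' else 0)" .
    hence "real q * cmod (\<Sum>h<q. \<Sum>h'<q. if C h h' then \<phi> (real h / real q) * cnj (\<phi> (real h' / real q)) else 0)
        \<le> real q * (\<Sum>h<q. \<Sum>h'<q. if C h h' then a h * a h' else 0)"
      by (rule mult_left_mono) simp
    thus ?thesis by (simp add: norm_mult)
  qed
  also have "real q * (\<Sum>h<q. \<Sum>h'<q. if C h h' then a h * a h' else 0)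
      \<le> real q * (\<Sum>h<q. (a h)^2 * real (card {h'. h' < q \<and> C h h'}))"
    by (intro mult_left_mono sym_bound Csym) (auto simp: a_def)
  also have "real q * (\<Sum>h<q. (a h)^2 * real (card {h'. h' < q \<and> C h h'}))
      \<le> real q * (\<Sum>h<q. (a h)^2 * (\<Sum>d\<in>Dq q. if sd q d dvd h then real (gd q d) else 0))"
    by (intro mult_left_mono sum_mono) (use card_R_bound[OF q] in \<open>auto simp: C_def\<close>)
  also have "\<dots> = real q * (\<Sum>d\<in>Dq q. real (gd q d) * (\<Sum>h\<in>{h. h < q \<and> sd q d dvd h}. (a h)^2))"
    by (simp only: swap_step[OF q])
  also have "\<dots> \<le> real q * (\<Sum>d\<in>Dq q. 2 * real q * T)"
  proof (rule mult_left_mono[OF _ of_nat_0_le_iff], rule sum_mono)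
    fix d assume d: "d \<in> Dq q"
    note P = Dq_props[OF q d]
    define s where "s = sd q d"
    define m where "m = q div s"
    have mm: "q \<le> m * m" using P(4) by (simp add: m_def s_def)
    have mpos: "m > 0" using mm q by (cases m) auto
    have "(\<Sum>h\<in>{h. h < q \<and> sd q d dvd h}. (a h)^2) = (\<Sum>k<m. f (real k / real m))"
      unfolding a_def f_def[symmetric] m_def s_def by (rule sum_multiples[OF P(1) P(2) q])
    also have "\<dots> = real m * ((\<Sum>k<m. f (real k / real m)) / real m)" using mpos by simp
    finally have e1: "(\<Sum>h\<in>{h. h < q \<and> sd q d dvd h}. (a h)^2) = real m * ((\<Sum>k<m. f (real k / real m)) / real m)" .
    have Rle: "(\<Sum>k<m. f (real k / real m)) / real m \<le> T" using R[OF mm] by (simp add: f_def)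
    have Rnn: "0 \<le> (\<Sum>k<m. f (real k / real m)) / real m" by (simp add: f_def sum_nonneg)
    have Tnn: "T \<ge> 0" using Rle Rnn by linarith
    have gm: "gd q d * m \<le> 2 * q"
    proof -
      have "gd q d * m \<le> 2 * s * m" using P(3) by (simp add: s_def)
      also have "\<dots> = 2 * q" using P(5) by (simp add: s_def m_def)
      finally show ?thesis .
    qed
    have "real (gd q d) * (real m * ((\<Sum>k<m. f (real k / real m)) / real m))
          \<le> real (gd q d) * (real m * T)"
      using Rle by (intro mult_left_mono) auto
    also have "\<dots> = real (gd q d * m) * T" by simp
    also have "\<dots> \<le> real (2 * q) * T"
    proof -
      have gm': "real (gd q d * m) \<le> real (2 * q)" using gm by (simp only: of_nat_le_iff)
      show ?thesis using gm' Tnn by (rule mult_right_mono)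
    qed
    finally show "real (gd q d) * (\<Sum>h\<in>{h. h < q \<and> sd q d dvd h}. (a h)^2) \<le> 2 * real q * T"
      using e1 by simp
  qed
  also have "\<dots> = real q * (real (card (Dq q)) * (2 * real q * T))" by simp
  finally show ?thesis by (simp add: power2_eq_square mult_ac)
qed

lemma ndiv_Dq: "ndiv q = card (Dq q)" by (simp add: ndiv_def Dq_def)

lemma tot_bound:
  assumes q: "q > 0"
  shows "q \<le> ndiv q * totient q"
proof -
  have fin: "finite {d. d dvd q}" using q by simp
  have "q = (\<Sum>d | d dvd q. totient d)" by (simp add: totient_divisor_sum)
  also have "\<dots> \<le> (\<Sum>d | d dvd q. totient q)"
    by (rule sum_mono) (use q in \<open>auto intro: totient_dvd_mono\<close>)
  also have "\<dots> = card {d. d dvd q} * totient q" by simp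
  also have "{d. d dvd q} = {d. d dvd q \<and> d > 0}" using q by (auto intro: Nat.gr0I)
  finally show ?thesis by (simp add: ndiv_def)
qed

lemma per_q:
  fixes \<phi> :: "real \<Rightarrow> complex" and q N :: nat and T :: real
  assumes q: "q > 0" and mu: "measure lebesgue D > 0" and nd: "ndiv q \<le> N" and T: "T \<ge> 0"
    and R: "\<And>m. q \<le> m * m \<Longrightarrow> (\<Sum>k<m. (cmod (\<phi> (real k / real m)))^2) / real m \<le> T"
  shows "M2 D \<phi> q / real q \<le> 2 * (real N)^2 * T / measure lebesgue D"
proof -
  define \<mu> where "\<mu> = measure lebesgue D"
  define n where "n = ndiv q"
  define t where "t = totient q"
  define S' where "S' = (\<Sum>p \<in> {p \<in> units_mod q. frac (real p / real q) \<in> D}. (cmod (gauss_phi \<phi> p q))^2)"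
  have tpos: "t > 0" using q by (simp add: t_def)
  have "S' \<le> (\<Sum>p\<in>{1..q}. (cmod (gauss_phi \<phi> p q))^2)"
    unfolding S'_def by (rule sum_mono2) (auto simp: units_mod_def)
  also have "\<dots> \<le> 2 * (real q)^2 * real n * T"
    using bound_q[OF q R] by (simp add: n_def ndiv_Dq)
  finally have S: "S' \<le> 2 * (real q)^2 * real n * T" .
  have qn: "q * n \<le> N * t * N"
  proof -
    have "q \<le> n * t" using tot_bound[OF q] by (simp add: n_def t_def)
    also have "\<dots> \<le> N * t" using nd by (simp add: n_def)
    finally show ?thesis using nd by (intro mult_le_mono) (auto simp: n_def)
  qed
  have "M2 D \<phi> q / real q = S' / (real t * \<mu> * real q)"
    by (simp add: M2_def S'_def t_def \<mu>_def)
  also have "\<dots> \<le> 2 * (real q)^2 * real n * T / (real t * \<mu> * real q)"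
    using S tpos q mu by (intro divide_right_mono) (auto simp: \<mu>_def)
  also have "\<dots> = (2 * T / \<mu>) * (real (q * n) / real t)"
    using q by (simp add: power2_eq_square field_simps)
  also have "\<dots> \<le> (2 * T / \<mu>) * (real (N * t * N) / real t)"
  proof -
    have "real (q * n) \<le> real (N * t * N)" using qn by (simp only: of_nat_le_iff)
    thus ?thesis using T mu tpos by (intro mult_left_mono divide_right_mono) (auto simp: \<mu>_def)
  qed
  also have "\<dots> = 2 * (real N)^2 * T / \<mu>" using tpos by (simp add: power2_eq_square field_simps)
  finally show ?thesis by (simp add: \<mu>_def)
qed

theorem lemma1p4:
  fixes D :: "real set" and N :: nat
  assumes "D \<subseteq> {0..<1}"
    and "frontier D \<in> null_sets lebesgue"
    and "measure lebesgue D > 0"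
    and "N > 0"
  shows "\<exists>C>0. \<forall>\<phi> :: real \<Rightarrow> complex.
           (\<forall>x. \<phi> (x + 1) = \<phi> x) \<and> riemann_integrable_on \<phi> 0 1 \<longrightarrow>
           Limsup (inf sequentially (principal {q. ndiv q \<le> N})) (\<lambda>q. ereal (M2 D \<phi> q / real q))
             \<le> ereal (C / measure lebesgue D * integral {0..1} (\<lambda>x. (cmod (\<phi> x))^2))"
proof -
  define \<mu> where "\<mu> = measure lebesgue D"
  have mu: "\<mu> > 0" using assms(3) by (simp add: \<mu>_def)
  define C where "C = 2 * (real N)^2"
  have Cpos: "C > 0" using assms(4) by (simp add: C_def)
  show ?thesis
  proof (intro exI[of _ C] conjI allI impI)
    show "C > 0" by (rule Cpos)
    fix \<phi> :: "real \<Rightarrow> complex"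
    assume H: "(\<forall>x. \<phi> (x + 1) = \<phi> x) \<and> riemann_integrable_on \<phi> 0 1"
    hence RI: "riemann_integrable_on \<phi> 0 1" by blast
    define J where "J = integral {0..1} (\<lambda>x. (cmod (\<phi> x))^2)"
    have Jnn: "J \<ge> 0" unfolding J_def
      by (rule integral_nonneg[OF RS_main(1)[OF RI]]) simp
    let ?F = "inf sequentially (principal {q. ndiv q \<le> N})"
    have key: "Limsup ?F (\<lambda>q. ereal (M2 D \<phi> q / real q)) \<le> ereal (C * (J + \<epsilon>) / \<mu>)"
      if e: "\<epsilon> > 0" for \<epsilon>
    proof (rule Limsup_bounded)
      obtain M where M: "M > 0" and HM: "\<forall>m\<ge>M. (\<Sum>k<m. (cmod (\<phi> (real k / real m)))^2) / real m \<le> J + \<epsilon>"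
        using RS_main(2)[OF RI, rule_format, OF e] unfolding J_def by blast
      have "ereal (M2 D \<phi> q / real q) \<le> ereal (C * (J + \<epsilon>) / \<mu>)"
        if q: "q \<ge> M * M + 1" and nd: "ndiv q \<le> N" for q
      proof -
        have qpos: "q > 0" using q by simp
        have R: "(\<Sum>k<m. (cmod (\<phi> (real k / real m)))^2) / real m \<le> J + \<epsilon>" if mm: "q \<le> m * m" for m
        proof -
          have "M \<le> m"
          proof (rule ccontr)
            assume "\<not> M \<le> m"
            hence "m < M" by simp
            hence "m * m < M * M" using M by (intro mult_strict_mono) auto
            thus False using mm q by simp
          qed
          thus ?thesis using HM by blast
        qed
        have "M2 D \<phi> q / real q \<le> 2 * (real N)^2 * (J + \<epsilon>) / measure lebesgue D"
          by (rule per_q[OF qpos assms(3) nd _ R]) (use Jnn e in simp)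
        thus ?thesis by (simp add: C_def \<mu>_def)
      qed
      hence "\<forall>q\<ge>M * M + 1. q \<in> {q. ndiv q \<le> N} \<longrightarrow> ereal (M2 D \<phi> q / real q) \<le> ereal (C * (J + \<epsilon>) / \<mu>)"
        by blast
      hence "eventually (\<lambda>q. q \<in> {q. ndiv q \<le> N} \<longrightarrow> ereal (M2 D \<phi> q / real q) \<le> ereal (C * (J + \<epsilon>) / \<mu>)) sequentially"
        unfolding eventually_sequentially by blast
      thus "eventually (\<lambda>q. ereal (M2 D \<phi> q / real q) \<le> ereal (C * (J + \<epsilon>) / \<mu>)) ?F"
        unfolding eventually_inf_principal by simp
    qed
    show "Limsup ?F (\<lambda>q. ereal (M2 D \<phi> q / real q)) \<le> ereal (C / measure lebesgue D * J)"
    proof (rule ereal_le_epsilon2)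
      fix e :: real assume e: "e > 0"
      have "e * \<mu> / C > 0" using e mu Cpos by simp
      hence "Limsup ?F (\<lambda>q. ereal (M2 D \<phi> q / real q)) \<le> ereal (C * (J + e * \<mu> / C) / \<mu>)"
        by (rule key)
      also have "C * (J + e * \<mu> / C) / \<mu> = C / measure lebesgue D * J + e"
        using mu Cpos by (simp add: \<mu>_def field_simps)
      finally show "Limsup ?F (\<lambda>q. ereal (M2 D \<phi> q / real q)) \<le> ereal (C / measure lebesgue D * J) + ereal e"
        by simp
    qed
  qed
qed

end
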